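(* Let $\Omega_x=(x_L,x_R)$, $\mathcal T>0$, $\varepsilon>0$, and let $\sigma_s(x)>0$, $\sigma_a(x)\ge 0$. Let $(\rho(x,t),g(x,v,t))$ be a (sufficiently smooth) solution on $\Omega_x\times(0,\mathcal T]$, $v\in\Omega_v$, of the micro-macro system $$\partial_t\rho+\partial_x\langle vg\rangle=-\sigma_a\rho,\qquad \partial_t g+\tfrac1\varepsilon v\partial_x g-\tfrac1\varepsilon\langle v\partial_x g\rangle+\tfrac1{\varepsilon^2}v\partial_x\rho=-\Big(\tfrac{\sigma_s}{\varepsilon^2}+\sigma_a\Big)g,$$ supplemented either with periodic boundary conditions in $x$, or with the homogeneous Dirichlet conditions $\rho(x_L,t)+\varepsilon g(x_L,v,t)=0$ for $v>0$ and $\rho(x_R,t)+\varepsilon g(x_R,v,t)=0$ for $v<0$. If the initial values satisfy $\langle g\rangle|_{t=0}=0$, then $$\|\rho(\cdot,\mathcal T)\|^2_{L^2(\Omega_x)}+\varepsilon^2\vert\!\vert\!\vert g(\cdot,\cdot,\mathcal T)\vert\!\vert\!\vert^2\le -2\int_0^{\mathcal T}\Big(\int_{\Omega_x}\sigma_a\rho^2\,dx+\Big\langle\int_{\Omega_x}(\sigma_s+\varepsilon^2\sigma_a)g^2\,dx\Big\rangle\Big)dt+\|\rho(\cdot,0)\|^2_{L^2(\Omega_x)}+\varepsilon^2\vert\!\vert\!\vert g(\cdot,\cdot,0)\vert\!\vert\!\vert^2,$$ with equality in the case of periodic boundary conditions.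
   Context: The velocity space $\Omega_v$ is bounded and carries a measure $\nu$; for a function $\varphi$ of $v$ (possibly also of $x,t$), $\langle\varphi\rangle=\int_{\Omega_v}\varphi\,d\nu$. It is assumed that $\langle 1\rangle=1$ and $\langle v\rangle=0$ (e.g. $\Omega_v=\{-1,1\}$ with $\langle f\rangle=\frac12(f|_{v=-1}+f|_{v=1})$, or $\Omega_v=[-1,1]$ with $\langle f\rangle=\frac12\int_{-1}^1 f\,dv$). The norm $\vert\!\vert\!\vert\varphi\vert\!\vert\!\vert$ is defined by $\vert\!\vert\!\vert\varphi\vert\!\vert\!\vert^2=\langle\|\varphi\|^2_{L^2(\Omega_x)}\rangle$, i.e. the $L^2$ norm in $x$ squared, averaged over velocity. *)

theory Defs
  imports "HOL-Probability.Probability"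
begin

definition vavg :: "real measure \<Rightarrow> (real \<Rightarrow> real) \<Rightarrow> real" where
  "vavg nu \<phi> = integral\<^sup>L nu \<phi>"

definition L2sq :: "real \<Rightarrow> real \<Rightarrow> (real \<Rightarrow> real) \<Rightarrow> real" where
  "L2sq a b f = integral {a..b} (\<lambda>x. (f x)\<^sup>2)"

definition tnormsq :: "real measure \<Rightarrow> real \<Rightarrow> real \<Rightarrow> (real \<Rightarrow> real \<Rightarrow> real) \<Rightarrow> real" where
  "tnormsq nu a b \<phi> = vavg nu (\<lambda>v. L2sq a b (\<lambda>x. \<phi> x v))"

end

theory Submission
  imports Defs
begin

lemma nu_meas:
  assumes "sets nu = sets (restrict_space borel V)" "continuous_on V f"
  shows "f \<in> borel_measurable nu"
  by (subst measurable_cong_sets[OF assms(1) refl]) (rule borel_measurable_continuous_on_restrict[OF assms(2)])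

lemma nu_integrable:
  fixes f :: "real \<Rightarrow> real"
  assumes "prob_space nu" "space nu = V" "sets nu = sets (restrict_space borel V)"
    "continuous_on V f" "\<And>v. v \<in> V \<Longrightarrow> \<bar>f v\<bar> \<le> B"
  shows "integrable nu f"
proof -
  interpret prob_space nu by fact
  show ?thesis
    by (rule integrable_const_bound[where B=B]) (use assms nu_meas in auto)
qed

lemma nu_deriv:
  fixes f f' :: "real \<Rightarrow> real \<Rightarrow> real"
  assumes P: "prob_space nu" and S: "convex S" "s0 \<in> S"
    and d: "\<And>s v. s \<in> S \<Longrightarrow> v \<in> space nu \<Longrightarrow> ((\<lambda>s. f s v) has_real_derivative f' s v) (at s within S)"
    and B: "\<And>s v. s \<in> S \<Longrightarrow> v \<in> space nu \<Longrightarrow> \<bar>f' s v\<bar> \<le> B"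
    and I: "\<And>s. s \<in> S \<Longrightarrow> integrable nu (f s)"
    and M: "f' s0 \<in> borel_measurable nu"
  shows "((\<lambda>s. \<integral>v. f s v \<partial>nu) has_real_derivative (\<integral>v. f' s0 v \<partial>nu)) (at s0 within S)"
proof -
  interpret prob_space nu by fact
  show ?thesis
  unfolding has_field_derivative_iff tendsto_at_iff_sequentially
  proof (intro allI impI)
    fix X :: "nat \<Rightarrow> real" assume X: "\<forall>i. X i \<in> S - {s0}" "X \<longlonglongrightarrow> s0"
    define q where "q i v = (f (X i) v - f s0 v) / (X i - s0)" for i v
    have eq: "((\<lambda>s. ((\<integral>v. f s v \<partial>nu) - (\<integral>v. f s0 v \<partial>nu)) / (s - s0)) \<circ> X) i = (\<integral>v. q i v \<partial>nu)" for i
    proof -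
      have "(\<integral>v. q i v \<partial>nu) = (\<integral>v. (f (X i) v - f s0 v) \<partial>nu) / (X i - s0)"
        unfolding q_def by (rule integral_divide_zero)
      also have "\<dots> = ((\<integral>v. f (X i) v \<partial>nu) - (\<integral>v. f s0 v \<partial>nu)) / (X i - s0)"
      proof -
        have "X i \<in> S" using X(1) by auto
        then show ?thesis using I[of "X i"] I[OF S(2)] by (simp add: integral_diff)
      qed
      finally show ?thesis by simp
    qed
    have lim: "(\<lambda>i. \<integral>v. q i v \<partial>nu) \<longlonglongrightarrow> (\<integral>v. f' s0 v \<partial>nu)"
    proof (rule integral_dominated_convergence[where w="\<lambda>_. B"])
      show "f' s0 \<in> borel_measurable nu" by fact
      show "q i \<in> borel_measurable nu" for i
        unfolding q_def using I X(1) S(2) by (intro borel_measurable_divide borel_measurable_diff) auto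
      show "integrable nu (\<lambda>_. B)" by simp
      show "AE v in nu. (\<lambda>i. q i v) \<longlonglongrightarrow> f' s0 v"
      proof (rule AE_I2)
        fix v assume v: "v \<in> space nu"
        have "((\<lambda>s. (f s v - f s0 v) / (s - s0)) \<longlongrightarrow> f' s0 v) (at s0 within S)"
          using d[OF S(2) v] unfolding has_field_derivative_iff .
        then show "(\<lambda>i. q i v) \<longlonglongrightarrow> f' s0 v"
          unfolding tendsto_at_iff_sequentially q_def using X by (auto simp: comp_def)
      qed
      show "AE v in nu. norm (q i v) \<le> B" for i
      proof (rule AE_I2)
        fix v assume v: "v \<in> space nu"
        have "norm (f (X i) v - f s0 v) \<le> B * norm (X i - s0)"
          by (rule field_differentiable_bound[OF S(1), where f="\<lambda>s. f s v" and f'="\<lambda>s. f' s v"])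
             (use d v B X S in auto)
        moreover have "X i \<noteq> s0" using X by auto
        ultimately show "norm (q i v) \<le> B" unfolding q_def
          by (simp add: divide_le_eq)
      qed
    qed
    show "((\<lambda>s. ((\<integral>v. f s v \<partial>nu) - (\<integral>v. f s0 v \<partial>nu)) / (s - s0)) \<circ> X) \<longlonglongrightarrow> (\<integral>v. f' s0 v \<partial>nu)"
      using lim unfolding eq .
  qed
qed

lemma nu_cont:
  fixes h :: "real \<Rightarrow> real \<Rightarrow> real"
  assumes P: "prob_space nu"
   and c: "\<And>v. v \<in> space nu \<Longrightarrow> continuous_on S (\<lambda>s. h s v)"
   and B: "\<And>s v. s \<in> S \<Longrightarrow> v \<in> space nu \<Longrightarrow> \<bar>h s v\<bar> \<le> B"
   and M: "\<And>s. s \<in> S \<Longrightarrow> h s \<in> borel_measurable nu"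
  shows "continuous_on S (\<lambda>s. \<integral>v. h s v \<partial>nu)"
proof (rule continuous_on_sequentiallyI)
  interpret prob_space nu by fact
  fix u a assume u: "\<forall>n. u n \<in> S" "a \<in> S" "u \<longlonglongrightarrow> a"
  show "(\<lambda>n. \<integral>v. h (u n) v \<partial>nu) \<longlonglongrightarrow> (\<integral>v. h a v \<partial>nu)"
  proof (rule integral_dominated_convergence[where w="\<lambda>_. B"])
    show "h a \<in> borel_measurable nu" using M u by auto
    show "h (u i) \<in> borel_measurable nu" for i using M u by auto
    show "integrable nu (\<lambda>_. B)" by simp
    show "AE v in nu. (\<lambda>i. h (u i) v) \<longlonglongrightarrow> h a v"
    proof (rule AE_I2)
      fix v assume "v \<in> space nu"
      then have "continuous_on S (\<lambda>s. h s v)" by (rule c)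
      then show "(\<lambda>i. h (u i) v) \<longlonglongrightarrow> h a v"
        using u unfolding continuous_on_sequentially comp_def by auto
    qed
    show "AE v in nu. norm (h (u i) v) \<le> B" for i
      using B u by (auto intro!: AE_I2)
  qed
qed

lemma integral_abs_bound:
  fixes h :: "real \<Rightarrow> real"
  assumes "continuous_on {a..b} h" "\<And>x. x \<in> {a..b} \<Longrightarrow> \<bar>h x\<bar> \<le> B" "a \<le> b"
  shows "\<bar>integral {a..b} h\<bar> \<le> B * (b - a)"
proof -
  have "0 \<le> B" using assms(2)[of a] assms(3) by auto
  have "(h has_integral integral {a..b} h) (cbox a b)"
    using integrable_continuous_real[OF assms(1)] by (simp add: integrable_integral)
  from has_integral_bound[OF \<open>0 \<le> B\<close> this] assms(2)
  show ?thesis using assms(3) by simp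
qed

lemma nu_swap:
  fixes h :: "real \<Rightarrow> real \<Rightarrow> real"
  assumes P: "prob_space nu" "space nu = V" "sets nu = sets (restrict_space borel V)" and ab: "a \<le> b"
    and c: "continuous_on ({a..b} \<times> V) (\<lambda>(x,v). h x v)"
    and B: "\<And>x v. x \<in> {a..b} \<Longrightarrow> v \<in> V \<Longrightarrow> \<bar>h x v\<bar> \<le> B"
  shows "(\<integral>v. integral {a..b} (\<lambda>x. h x v) \<partial>nu) = integral {a..b} (\<lambda>x. \<integral>v. h x v \<partial>nu)"
proof -
  define F where "F y = (\<integral>v. integral {a..y} (\<lambda>x. h x v) \<partial>nu)" for y
  have cx: "continuous_on {a..b} (\<lambda>x. h x v)" if "v \<in> V" for v
    by (rule continuous_on_compose2[OF c, where f="\<lambda>x. (x, v)", simplified])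
       (use that in \<open>auto intro!: continuous_intros\<close>)
  have cv: "continuous_on V (\<lambda>v. h x v)" if "x \<in> {a..b}" for x
    by (rule continuous_on_compose2[OF c, where f="\<lambda>v. (x, v)", simplified])
       (use that in \<open>auto intro!: continuous_intros\<close>)
  have cvi: "continuous_on V (\<lambda>v. integral {a..y} (\<lambda>x. h x v))" if "y \<in> {a..b}" for y
  proof -
    have "continuous_on (V \<times> cbox a y) (\<lambda>(v, x). h x v)"
      by (rule continuous_on_swap_args, rule continuous_on_subset[OF c]) (use that in auto)
    from integral_continuous_on_param[OF this] show ?thesis by simp
  qed
  have der: "(F has_real_derivative (\<integral>v. h y v \<partial>nu)) (at y within {a..b})" if y: "y \<in> {a..b}" for y
    unfolding F_def
  proof (rule nu_deriv[OF P(1) convex_real_interval(5) y, where B=B])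
    show "((\<lambda>s. integral {a..s} (\<lambda>x. h x v)) has_real_derivative h s v) (at s within {a..b})"
      if "s \<in> {a..b}" "v \<in> space nu" for s v
      by (rule integral_has_real_derivative) (use that cx P in auto)
    show "\<bar>h s v\<bar> \<le> B" if "s \<in> {a..b}" "v \<in> space nu" for s v using B that P by auto
    show "integrable nu (\<lambda>v. integral {a..s} (\<lambda>x. h x v))" if s: "s \<in> {a..b}" for s
    proof (rule nu_integrable[OF P cvi[OF s]])
      fix v assume v: "v \<in> V"
      have "\<bar>integral {a..s} (\<lambda>x. h x v)\<bar> \<le> B * (s - a)"
        by (rule integral_abs_bound) (use s v B in \<open>auto intro: continuous_on_subset[OF cx[OF v]]\<close>)
      also have "\<dots> \<le> \<bar>B\<bar> * (b - a)" using s by (intro mult_mono) auto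
      finally show "\<bar>integral {a..s} (\<lambda>x. h x v)\<bar> \<le> \<bar>B\<bar> * (b - a)" .
    qed
    show "(\<lambda>v. h y v) \<in> borel_measurable nu" by (rule nu_meas[OF P(3) cv[OF y]])
  qed
  have "((\<lambda>y. \<integral>v. h y v \<partial>nu) has_integral (F b - F a)) {a..b}"
    by (rule fundamental_theorem_of_calculus[OF ab])
       (use der in \<open>auto simp: has_real_derivative_iff_has_vector_derivative\<close>)
  moreover have "F a = 0" unfolding F_def by simp
  ultimately show ?thesis unfolding F_def by (simp add: integral_unique)
qed

lemma abs_mult_le: "\<bar>a\<bar> \<le> A \<Longrightarrow> \<bar>b\<bar> \<le> B \<Longrightarrow> \<bar>a * b\<bar> \<le> (A::real) * B"
  unfolding abs_mult by (rule mult_mono') auto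

locale mm =
  fixes xL xR T \<epsilon> :: real
    and V :: "real set" and nu :: "real measure"
    and ss sa :: "real \<Rightarrow> real"
    and rho rho_t rho_x :: "real \<Rightarrow> real \<Rightarrow> real"
    and g g_t g_x :: "real \<Rightarrow> real \<Rightarrow> real \<Rightarrow> real"
  assumes dom: "xL < xR" and T_pos: "T > 0" and eps_pos: "\<epsilon> > 0"
    and Ov_bounded: "bounded V"
    and nu_space: "space nu = V"
    and nu_sets: "sets nu = sets (restrict_space borel V)"
    and nu_prob: "prob_space nu"
    and nu_mean: "vavg nu (\<lambda>v. v) = 0"
    and ss_pos: "\<And>x. x \<in> {xL..xR} \<Longrightarrow> ss x > 0"
    and sa_nonneg: "\<And>x. x \<in> {xL..xR} \<Longrightarrow> sa x \<ge> 0"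
    and ss_cont: "continuous_on {xL..xR} ss"
    and sa_cont: "continuous_on {xL..xR} sa"
    and rho_dt: "\<And>x t. x \<in> {xL..xR} \<Longrightarrow> t \<in> {0..T} \<Longrightarrow>
        ((\<lambda>s. rho x s) has_real_derivative rho_t x t) (at t within {0..T})"
    and rho_dx: "\<And>x t. x \<in> {xL..xR} \<Longrightarrow> t \<in> {0..T} \<Longrightarrow>
        ((\<lambda>y. rho y t) has_real_derivative rho_x x t) (at x within {xL..xR})"
    and rho_cont: "continuous_on ({xL..xR} \<times> {0..T}) (\<lambda>(x, t). rho x t)"
    and rho_t_cont: "continuous_on ({xL..xR} \<times> {0..T}) (\<lambda>(x, t). rho_t x t)"
    and rho_x_cont: "continuous_on ({xL..xR} \<times> {0..T}) (\<lambda>(x, t). rho_x x t)"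
    and g_dt: "\<And>x v t. x \<in> {xL..xR} \<Longrightarrow> v \<in> V \<Longrightarrow> t \<in> {0..T} \<Longrightarrow>
        ((\<lambda>s. g x v s) has_real_derivative g_t x v t) (at t within {0..T})"
    and g_dx: "\<And>x v t. x \<in> {xL..xR} \<Longrightarrow> v \<in> V \<Longrightarrow> t \<in> {0..T} \<Longrightarrow>
        ((\<lambda>y. g y v t) has_real_derivative g_x x v t) (at x within {xL..xR})"
    and g_cont: "continuous_on ({xL..xR} \<times> V \<times> {0..T}) (\<lambda>(x, v, t). g x v t)"
    and g_t_cont: "continuous_on ({xL..xR} \<times> V \<times> {0..T}) (\<lambda>(x, v, t). g_t x v t)"
    and g_x_cont: "continuous_on ({xL..xR} \<times> V \<times> {0..T}) (\<lambda>(x, v, t). g_x x v t)"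
    and g_bdd: "bounded ((\<lambda>(x, v, t). g x v t) ` ({xL..xR} \<times> V \<times> {0..T}))"
    and g_t_bdd: "bounded ((\<lambda>(x, v, t). g_t x v t) ` ({xL..xR} \<times> V \<times> {0..T}))"
    and g_x_bdd: "bounded ((\<lambda>(x, v, t). g_x x v t) ` ({xL..xR} \<times> V \<times> {0..T}))"
    and eq_rho: "\<And>x t. x \<in> {xL<..<xR} \<Longrightarrow> t \<in> {0<..T} \<Longrightarrow>
        ((\<lambda>y. vavg nu (\<lambda>v. v * g y v t)) has_real_derivative
           (- sa x * rho x t - rho_t x t)) (at x)"
    and eq_g: "\<And>x v t. x \<in> {xL<..<xR} \<Longrightarrow> v \<in> V \<Longrightarrow> t \<in> {0<..T} \<Longrightarrow>
        g_t x v t + (1 / \<epsilon>) * v * g_x x v t - (1 / \<epsilon>) * vavg nu (\<lambda>w. w * g_x x w t)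
          + (1 / \<epsilon>\<^sup>2) * v * rho_x x t
        = - (ss x / \<epsilon>\<^sup>2 + sa x) * g x v t"
    and init: "\<And>x. x \<in> {xL<..<xR} \<Longrightarrow> vavg nu (\<lambda>v. g x v 0) = 0"
begin

lemma bnd3:
  fixes f :: "real \<Rightarrow> real \<Rightarrow> real \<Rightarrow> real"
  assumes "bounded ((\<lambda>(x, v, t). f x v t) ` (A \<times> B \<times> C))"
  shows "\<exists>M. \<forall>x\<in>A. \<forall>v\<in>B. \<forall>t\<in>C. \<bar>f x v t\<bar> \<le> M"
proof -
  from assms obtain M where "\<forall>y\<in>(\<lambda>(x, v, t). f x v t) ` (A \<times> B \<times> C). norm y \<le> M"
    by (auto simp: bounded_iff)
  note M = this
  have "\<bar>f x v t\<bar> \<le> M" if "x \<in> A" "v \<in> B" "t \<in> C" for x v t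
  proof -
    have "f x v t \<in> (\<lambda>(x, v, t). f x v t) ` (A \<times> B \<times> C)"
      by (rule image_eqI[where x="(x,v,t)"]) (use that in auto)
    from M[rule_format, OF this] show ?thesis by simp
  qed
  then show ?thesis by blast
qed

lemma bnd2:
  fixes f :: "real \<Rightarrow> real \<Rightarrow> real"
  assumes "continuous_on ({xL..xR} \<times> {0..T}) (\<lambda>(x, t). f x t)"
  shows "\<exists>M. \<forall>x\<in>{xL..xR}. \<forall>t\<in>{0..T}. \<bar>f x t\<bar> \<le> M"
proof -
  have "compact ((\<lambda>(x, t). f x t) ` ({xL..xR} \<times> {0..T}))"
    by (intro compact_continuous_image assms compact_Times compact_Icc)
  from compact_imp_bounded[OF this] obtain M where "\<forall>y\<in>(\<lambda>(x, t). f x t) ` ({xL..xR} \<times> {0..T}). norm y \<le> M"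
    unfolding bounded_iff by blast
  note M = this
  have "\<bar>f x t\<bar> \<le> M" if "x \<in> {xL..xR}" "t \<in> {0..T}" for x t
  proof -
    have "f x t \<in> (\<lambda>(x, t). f x t) ` ({xL..xR} \<times> {0..T})"
      by (rule image_eqI[where x="(x,t)"]) (use that in auto)
    from M[rule_format, OF this] show ?thesis by simp
  qed
  then show ?thesis by blast
qed

lemma bnd1:
  fixes f :: "real \<Rightarrow> real"
  assumes "continuous_on {xL..xR} f"
  shows "\<exists>M. \<forall>x\<in>{xL..xR}. \<bar>f x\<bar> \<le> M"
proof -
  have "compact (f ` {xL..xR})"
    by (intro compact_continuous_image assms compact_Icc)
  from compact_imp_bounded[OF this] obtain M where "\<forall>y\<in>f ` {xL..xR}. norm y \<le> M"
    unfolding bounded_iff by blast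
  then show ?thesis by auto
qed

definition "Mg = (SOME M. \<forall>x\<in>{xL..xR}. \<forall>v\<in>V. \<forall>t\<in>{0..T}. \<bar>g x v t\<bar> \<le> M)"
definition "Mgt = (SOME M. \<forall>x\<in>{xL..xR}. \<forall>v\<in>V. \<forall>t\<in>{0..T}. \<bar>g_t x v t\<bar> \<le> M)"
definition "Mgx = (SOME M. \<forall>x\<in>{xL..xR}. \<forall>v\<in>V. \<forall>t\<in>{0..T}. \<bar>g_x x v t\<bar> \<le> M)"
definition "Mr = (SOME M. \<forall>x\<in>{xL..xR}. \<forall>t\<in>{0..T}. \<bar>rho x t\<bar> \<le> M)"
definition "Mrt = (SOME M. \<forall>x\<in>{xL..xR}. \<forall>t\<in>{0..T}. \<bar>rho_t x t\<bar> \<le> M)"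
definition "Mrx = (SOME M. \<forall>x\<in>{xL..xR}. \<forall>t\<in>{0..T}. \<bar>rho_x x t\<bar> \<le> M)"
definition "Ms = (SOME M. \<forall>x\<in>{xL..xR}. \<bar>ss x\<bar> \<le> M)"
definition "Ma = (SOME M. \<forall>x\<in>{xL..xR}. \<bar>sa x\<bar> \<le> M)"
definition "Mv = (SOME M. \<forall>v\<in>V. \<bar>v\<bar> \<le> M)"

lemma gB: assumes "x \<in> {xL..xR}" "v \<in> V" "t \<in> {0..T}" shows "\<bar>g x v t\<bar> \<le> Mg"
proof -
  note ex = someI_ex[OF bnd3[OF g_bdd]]
  from ex[folded Mg_def] show ?thesis using assms by blast
qed
lemma gtB: assumes "x \<in> {xL..xR}" "v \<in> V" "t \<in> {0..T}" shows "\<bar>g_t x v t\<bar> \<le> Mgt"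
proof -
  note ex = someI_ex[OF bnd3[OF g_t_bdd]]
  from ex[folded Mgt_def] show ?thesis using assms by blast
qed
lemma gxB: assumes "x \<in> {xL..xR}" "v \<in> V" "t \<in> {0..T}" shows "\<bar>g_x x v t\<bar> \<le> Mgx"
proof -
  note ex = someI_ex[OF bnd3[OF g_x_bdd]]
  from ex[folded Mgx_def] show ?thesis using assms by blast
qed
lemma rB: assumes "x \<in> {xL..xR}" "t \<in> {0..T}" shows "\<bar>rho x t\<bar> \<le> Mr"
proof -
  note ex = someI_ex[OF bnd2[OF rho_cont]]
  from ex[folded Mr_def] show ?thesis using assms by blast
qed
lemma rtB: assumes "x \<in> {xL..xR}" "t \<in> {0..T}" shows "\<bar>rho_t x t\<bar> \<le> Mrt"
proof -
  note ex = someI_ex[OF bnd2[OF rho_t_cont]]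
  from ex[folded Mrt_def] show ?thesis using assms by blast
qed
lemma rxB: assumes "x \<in> {xL..xR}" "t \<in> {0..T}" shows "\<bar>rho_x x t\<bar> \<le> Mrx"
proof -
  note ex = someI_ex[OF bnd2[OF rho_x_cont]]
  from ex[folded Mrx_def] show ?thesis using assms by blast
qed
lemma sB: assumes "x \<in> {xL..xR}" shows "\<bar>ss x\<bar> \<le> Ms"
proof -
  note ex = someI_ex[OF bnd1[OF ss_cont]]
  from ex[folded Ms_def] show ?thesis using assms by blast
qed
lemma aB: assumes "x \<in> {xL..xR}" shows "\<bar>sa x\<bar> \<le> Ma"
proof -
  note ex = someI_ex[OF bnd1[OF sa_cont]]
  from ex[folded Ma_def] show ?thesis using assms by blast
qed
lemma vB: assumes "v \<in> V" shows "\<bar>v\<bar> \<le> Mv"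
proof -
  have "\<exists>M. \<forall>v\<in>V. \<bar>v\<bar> \<le> M" using Ov_bounded by (auto simp: bounded_iff)
  note ex = someI_ex[OF this]
  from ex[folded Mv_def] show ?thesis using assms by blast
qed

lemma g_comp:
  assumes "continuous_on S f1" "continuous_on S f2" "continuous_on S f3"
    "\<And>s. s \<in> S \<Longrightarrow> f1 s \<in> {xL..xR}" "\<And>s. s \<in> S \<Longrightarrow> f2 s \<in> V" "\<And>s. s \<in> S \<Longrightarrow> f3 s \<in> {0..T}"
  shows "continuous_on S (\<lambda>s. g (f1 s) (f2 s) (f3 s))"
    and "continuous_on S (\<lambda>s. g_t (f1 s) (f2 s) (f3 s))"
    and "continuous_on S (\<lambda>s. g_x (f1 s) (f2 s) (f3 s))"
proof -
  have c: "continuous_on S (\<lambda>s. (f1 s, f2 s, f3 s))" by (intro continuous_on_Pair assms)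
  have i: "(\<lambda>s. (f1 s, f2 s, f3 s)) ` S \<subseteq> {xL..xR} \<times> V \<times> {0..T}" using assms by auto
  show "continuous_on S (\<lambda>s. g (f1 s) (f2 s) (f3 s))"
    using continuous_on_compose2[OF g_cont c i] by simp
  show "continuous_on S (\<lambda>s. g_t (f1 s) (f2 s) (f3 s))"
    using continuous_on_compose2[OF g_t_cont c i] by simp
  show "continuous_on S (\<lambda>s. g_x (f1 s) (f2 s) (f3 s))"
    using continuous_on_compose2[OF g_x_cont c i] by simp
qed

lemma r_comp:
  assumes "continuous_on S f1" "continuous_on S f3"
    "\<And>s. s \<in> S \<Longrightarrow> f1 s \<in> {xL..xR}" "\<And>s. s \<in> S \<Longrightarrow> f3 s \<in> {0..T}"
  shows "continuous_on S (\<lambda>s. rho (f1 s) (f3 s))"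
    and "continuous_on S (\<lambda>s. rho_t (f1 s) (f3 s))"
    and "continuous_on S (\<lambda>s. rho_x (f1 s) (f3 s))"
proof -
  have c: "continuous_on S (\<lambda>s. (f1 s, f3 s))" by (intro continuous_on_Pair assms)
  have i: "(\<lambda>s. (f1 s, f3 s)) ` S \<subseteq> {xL..xR} \<times> {0..T}" using assms by auto
  show "continuous_on S (\<lambda>s. rho (f1 s) (f3 s))"
    using continuous_on_compose2[OF rho_cont c i] by simp
  show "continuous_on S (\<lambda>s. rho_t (f1 s) (f3 s))"
    using continuous_on_compose2[OF rho_t_cont c i] by simp
  show "continuous_on S (\<lambda>s. rho_x (f1 s) (f3 s))"
    using continuous_on_compose2[OF rho_x_cont c i] by simp
qed

lemma s_comp:
  assumes "continuous_on S f1" "\<And>s. s \<in> S \<Longrightarrow> f1 s \<in> {xL..xR}"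
  shows "continuous_on S (\<lambda>s. ss (f1 s))" and "continuous_on S (\<lambda>s. sa (f1 s))"
proof -
  have "f1 ` S \<subseteq> {xL..xR}" using assms(2) by auto
  then show "continuous_on S (\<lambda>s. ss (f1 s))" "continuous_on S (\<lambda>s. sa (f1 s))"
    using continuous_on_compose2[OF ss_cont assms(1)] continuous_on_compose2[OF sa_cont assms(1)] by auto
qed

lemma intV:
  fixes f :: "real \<Rightarrow> real"
  assumes "continuous_on V f" "\<And>v. v \<in> V \<Longrightarrow> \<bar>f v\<bar> \<le> B"
  shows "integrable nu f"
  by (rule nu_integrable[OF nu_prob nu_space nu_sets assms(1)]) (rule assms(2))

lemma measV:
  fixes f :: "real \<Rightarrow> real"
  assumes "continuous_on V f"
  shows "f \<in> borel_measurable nu"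
  by (rule nu_meas[OF nu_sets assms])

lemma meas1: "measure nu (space nu) = 1"
  using prob_space.prob_space[OF nu_prob] by simp

lemma int_const: "(\<integral>v. c \<partial>nu) = (c::real)"
  using meas1 by simp

lemma iconst: "integrable nu (\<lambda>v. c::real)"
  using nu_prob by (simp add: prob_space_def finite_measure.integrable_const)

lemma vint0: "(\<integral>v. v \<partial>nu) = 0"
  using nu_mean by (simp add: vavg_def)

lemma cV:
  assumes "x \<in> {xL..xR}" "s \<in> {0..T}"
  shows "continuous_on V (\<lambda>v. g x v s)" "continuous_on V (\<lambda>v. g_t x v s)" "continuous_on V (\<lambda>v. g_x x v s)"
  using g_comp[of V "\<lambda>_. x" "\<lambda>v. v" "\<lambda>_. s"] assms by (auto intro!: continuous_intros)

lemma intv: "integrable nu (\<lambda>v. v)"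
  by (rule intV[where B=Mv]) (auto intro!: continuous_intros vB)

lemma gavg0:
  assumes x: "x \<in> {xL<..<xR}" and t: "t \<in> {0..T}"
  shows "(\<integral>v. g x v t \<partial>nu) = 0"
proof -
  have xI: "x \<in> {xL..xR}" using x by auto
  define G where "G s = (\<integral>v. g x v s \<partial>nu)" for s
  define k where "k = ss x / \<epsilon>\<^sup>2 + sa x"
  have Gd: "(G has_real_derivative (\<integral>v. g_t x v s \<partial>nu)) (at s within {0..T})" if s: "s \<in> {0..T}" for s
    unfolding G_def
  proof (rule nu_deriv[OF nu_prob convex_real_interval(5) s, where B=Mgt])
    show "((\<lambda>s. g x v s) has_real_derivative g_t x v s) (at s within {0..T})"
      if "s \<in> {0..T}" "v \<in> space nu" for s v using g_dt xI that nu_space by auto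
    show "\<bar>g_t x v s\<bar> \<le> Mgt" if "s \<in> {0..T}" "v \<in> space nu" for s v using gtB xI that nu_space by auto
    show "integrable nu (\<lambda>v. g x v s)" if "s \<in> {0..T}" for s
      by (rule intV[OF cV(1)[OF xI that], where B=Mg]) (use gB xI that in auto)
    show "(\<lambda>v. g_t x v s) \<in> borel_measurable nu" by (rule measV[OF cV(2)[OF xI s]])
  qed
  have Gt: "(\<integral>v. g_t x v s \<partial>nu) = - k * G s" if s: "s \<in> {0<..T}" for s
  proof -
    have sJ: "s \<in> {0..T}" using s by auto
    define N where "N = vavg nu (\<lambda>w. w * g_x x w s)"
    have N: "N = (\<integral>v. v * g_x x v s \<partial>nu)" unfolding N_def vavg_def ..
    have pw: "g_t x v s = (1/\<epsilon>) * N - (1/\<epsilon>) * (v * g_x x v s) - ((1/\<epsilon>\<^sup>2) * rho_x x s) * v - k * g x v s"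
      if v: "v \<in> V" for v
    proof -
      have "g_t x v s = - (ss x / \<epsilon>\<^sup>2 + sa x) * g x v s - (1 / \<epsilon>) * v * g_x x v s + (1 / \<epsilon>) * N
            - (1 / \<epsilon>\<^sup>2) * v * rho_x x s"
        using eq_g[OF x v s] unfolding N_def by linarith
      then show ?thesis unfolding k_def by (simp add: algebra_simps)
    qed
    have i1: "integrable nu (\<lambda>v. v * g_x x v s)"
      by (rule intV[where B="Mv * Mgx"]) (use cV(3)[OF xI sJ] in \<open>auto intro!: continuous_intros abs_mult_le vB gxB xI sJ\<close>)
    have i2: "integrable nu (\<lambda>v. g x v s)"
      by (rule intV[OF cV(1)[OF xI sJ], where B=Mg]) (use gB xI sJ in auto)
    have "(\<integral>v. g_t x v s \<partial>nu) = (\<integral>v. (1/\<epsilon>) * N - (1/\<epsilon>) * (v * g_x x v s) - ((1/\<epsilon>\<^sup>2) * rho_x x s) * v - k * g x v s \<partial>nu)"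
      by (rule Bochner_Integration.integral_cong[OF refl]) (use pw nu_space in auto)
    also have "\<dots> = (1/\<epsilon>) * N - (1/\<epsilon>) * N - ((1/\<epsilon>\<^sup>2) * rho_x x s) * 0 - k * G s"
    proof -
      have j1: "integrable nu (\<lambda>v. (1/\<epsilon>) * N - (1/\<epsilon>) * (v * g_x x v s))"
        by (intro Bochner_Integration.integrable_diff iconst integrable_mult_right i1)
      have j2: "integrable nu (\<lambda>v. (1/\<epsilon>) * N - (1/\<epsilon>) * (v * g_x x v s) - ((1/\<epsilon>\<^sup>2) * rho_x x s) * v)"
        by (intro Bochner_Integration.integrable_diff iconst integrable_mult_right i1 intv)
      have j3: "integrable nu (\<lambda>v. k * g x v s)" by (intro integrable_mult_right i2)
      have j4: "integrable nu (\<lambda>v. ((1/\<epsilon>\<^sup>2) * rho_x x s) * v)" by (intro integrable_mult_right intv)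
      have j5: "integrable nu (\<lambda>v. (1/\<epsilon>) * (v * g_x x v s))" by (intro integrable_mult_right i1)
      show ?thesis
        unfolding Bochner_Integration.integral_diff[OF j2 j3] Bochner_Integration.integral_diff[OF j1 j4]
          Bochner_Integration.integral_diff[OF iconst j5] integral_mult_right_zero int_const vint0 G_def
        by (simp add: N)
    qed
    finally show ?thesis by simp
  qed
  define H where "H s = exp (k * s) * G s" for s
  have Gc: "continuous_on {0..T} G"
    unfolding continuous_on_eq_continuous_within using Gd DERIV_continuous by blast
  show ?thesis
  proof (cases "t = 0")
    case True
    then show ?thesis using init[OF x] by (simp add: vavg_def)
  next
    case False
    then have t0: "0 < t" using t by auto
    have "H t = H 0"
    proof (rule DERIV_isconst_end[OF t0])
      show "continuous_on {0..t} H" unfolding H_def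
        by (intro continuous_intros continuous_on_subset[OF Gc]) (use t in auto)
      fix s assume s: "0 < s" "s < t"
      have "(G has_real_derivative (\<integral>v. g_t x v s \<partial>nu)) (at s)"
        using Gd[of s] s t at_within_interior[of s "{0..T}"] by auto
      then have "(G has_real_derivative - k * G s) (at s)" using Gt[of s] s t by auto
      then have "(H has_real_derivative (k * exp (k * s) * G s + exp (k * s) * (- k * G s))) (at s)"
        unfolding H_def by (auto intro!: derivative_eq_intros)
      then show "(H has_real_derivative 0) (at s)" by (simp add: algebra_simps)
    qed
    moreover have "H 0 = 0" unfolding H_def G_def using init[OF x] by (simp add: vavg_def)
    ultimately show ?thesis unfolding H_def G_def by simp
  qed
qed


definition "P t = integral {xL..xR} (\<lambda>x. (rho x t)\<^sup>2)"
definition "Pd t = integral {xL..xR} (\<lambda>x. 2 * rho x t * rho_t x t)"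
definition "q t v = integral {xL..xR} (\<lambda>x. (g x v t)\<^sup>2)"
definition "qd t v = integral {xL..xR} (\<lambda>x. 2 * g x v t * g_t x v t)"
definition "Q t = (\<integral>v. q t v \<partial>nu)"
definition "Qd t = (\<integral>v. qd t v \<partial>nu)"

lemma Pder:
  assumes t: "t \<in> {0..T}"
  shows "(P has_real_derivative Pd t) (at t within {0..T})"
proof -
  have "((\<lambda>t. integral (cbox xL xR) (\<lambda>x. (rho x t)\<^sup>2)) has_field_derivative
      integral (cbox xL xR) (\<lambda>x. 2 * rho x t * rho_t x t)) (at t within {0..T})"
  proof (rule leibniz_rule_field_derivative[OF _ _ _ t])
    show "((\<lambda>t. (rho x t)\<^sup>2) has_field_derivative 2 * rho x t * rho_t x t) (at t within {0..T})"
      if "t \<in> {0..T}" "x \<in> cbox xL xR" for t x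
      using that rho_dt[of x t] by (auto intro!: derivative_eq_intros)
    show "(\<lambda>x. (rho x t)\<^sup>2) integrable_on cbox xL xR" if "t \<in> {0..T}" for t
      by (rule integrable_continuous) (use that in \<open>auto intro!: continuous_intros r_comp\<close>)
    show "continuous_on ({0..T} \<times> cbox xL xR) (\<lambda>(t, x). 2 * rho x t * rho_t x t)"
      unfolding split_beta' by (auto intro!: continuous_intros r_comp)
    show "convex {0..T}" by simp
  qed
  then show ?thesis unfolding P_def Pd_def by simp
qed

lemma qder:
  assumes t: "t \<in> {0..T}" and v: "v \<in> V"
  shows "((\<lambda>t. q t v) has_real_derivative qd t v) (at t within {0..T})"
proof -
  have "((\<lambda>t. integral (cbox xL xR) (\<lambda>x. (g x v t)\<^sup>2)) has_field_derivative
      integral (cbox xL xR) (\<lambda>x. 2 * g x v t * g_t x v t)) (at t within {0..T})"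
  proof (rule leibniz_rule_field_derivative[OF _ _ _ t])
    show "((\<lambda>t. (g x v t)\<^sup>2) has_field_derivative 2 * g x v t * g_t x v t) (at t within {0..T})"
      if "t \<in> {0..T}" "x \<in> cbox xL xR" for t x
      using that v g_dt[of x v t] by (auto intro!: derivative_eq_intros)
    show "(\<lambda>x. (g x v t)\<^sup>2) integrable_on cbox xL xR" if "t \<in> {0..T}" for t
      by (rule integrable_continuous) (use that v in \<open>auto intro!: continuous_intros g_comp\<close>)
    show "continuous_on ({0..T} \<times> cbox xL xR) (\<lambda>(t, x). 2 * g x v t * g_t x v t)"
      unfolding split_beta' using v by (auto intro!: continuous_intros g_comp)
    show "convex {0..T}" by simp
  qed
  then show ?thesis unfolding q_def qd_def by simp
qed

lemma q_contV:
  assumes t: "t \<in> {0..T}"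
  shows "continuous_on V (\<lambda>v. q t v)" "continuous_on V (\<lambda>v. qd t v)"
proof -
  have "continuous_on V (\<lambda>v. integral (cbox xL xR) (\<lambda>x. (g x v t)\<^sup>2))"
    by (rule integral_continuous_on_param) (unfold split_beta', use t in \<open>auto intro!: continuous_intros g_comp\<close>)
  then show "continuous_on V (\<lambda>v. q t v)" unfolding q_def by simp
  have "continuous_on V (\<lambda>v. integral (cbox xL xR) (\<lambda>x. 2 * g x v t * g_t x v t))"
    by (rule integral_continuous_on_param) (unfold split_beta', use t in \<open>auto intro!: continuous_intros g_comp\<close>)
  then show "continuous_on V (\<lambda>v. qd t v)" unfolding qd_def by simp
qed

lemma q_bnd:
  assumes t: "t \<in> {0..T}" and v: "v \<in> V"
  shows "\<bar>q t v\<bar> \<le> (Mg * Mg) * (xR - xL)" "\<bar>qd t v\<bar> \<le> (2 * Mg * Mgt) * (xR - xL)"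
proof -
  have b: "\<bar>(g x v t)\<^sup>2\<bar> \<le> Mg * Mg" if "x \<in> {xL..xR}" for x
    using abs_mult_le[OF gB[OF that v t] gB[OF that v t]] unfolding power2_eq_square .
  show "\<bar>q t v\<bar> \<le> (Mg * Mg) * (xR - xL)" unfolding q_def
    by (rule integral_abs_bound) (use t v dom b in \<open>auto intro!: continuous_intros g_comp\<close>)
  show "\<bar>qd t v\<bar> \<le> (2 * Mg * Mgt) * (xR - xL)" unfolding qd_def
    by (rule integral_abs_bound) (use t v dom in \<open>auto intro!: continuous_intros g_comp abs_mult_le gB gtB\<close>)
qed

lemma Qder:
  assumes t: "t \<in> {0..T}"
  shows "(Q has_real_derivative Qd t) (at t within {0..T})"
  unfolding Q_def Qd_def
proof (rule nu_deriv[OF nu_prob convex_real_interval(5) t, where B="(2 * Mg * Mgt) * (xR - xL)"])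
  show "((\<lambda>s. q s v) has_real_derivative qd s v) (at s within {0..T})"
    if "s \<in> {0..T}" "v \<in> space nu" for s v using qder that nu_space by auto
  show "\<bar>qd s v\<bar> \<le> (2 * Mg * Mgt) * (xR - xL)" if "s \<in> {0..T}" "v \<in> space nu" for s v
    using q_bnd that nu_space by auto
  show "integrable nu (q s)" if "s \<in> {0..T}" for s
    using intV[OF q_contV(1)[OF that] q_bnd(1)[OF that]] by simp
  show "qd t \<in> borel_measurable nu" using measV[OF q_contV(2)[OF t]] by simp
qed


definition "m t x = (\<integral>v. v * g x v t \<partial>nu)"
definition "n t x = (\<integral>v. v * g_x x v t \<partial>nu)"

lemma nu_bound:
  fixes f :: "real \<Rightarrow> real"
  assumes "integrable nu f" "\<And>v. v \<in> V \<Longrightarrow> \<bar>f v\<bar> \<le> B"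
  shows "\<bar>\<integral>v. f v \<partial>nu\<bar> \<le> B"
proof -
  have "\<bar>\<integral>v. f v \<partial>nu\<bar> \<le> (\<integral>v. \<bar>f v\<bar> \<partial>nu)"
    using Bochner_Integration.integral_norm_bound[of nu f] by simp
  also have "\<dots> \<le> (\<integral>v. B \<partial>nu)"
    by (rule integral_mono) (use assms nu_space iconst in auto)
  finally show ?thesis by (simp add: meas1)
qed

lemma vg_int:
  assumes "x \<in> {xL..xR}" "t \<in> {0..T}"
  shows "integrable nu (\<lambda>v. v * g x v t)" "integrable nu (\<lambda>v. v * g_x x v t)"
    "integrable nu (\<lambda>v. g x v t)" "integrable nu (\<lambda>v. v * (g x v t)\<^sup>2)"
proof -
  show "integrable nu (\<lambda>v. v * g x v t)"
    by (rule intV[where B="Mv * Mg"]) (use assms in \<open>auto intro!: continuous_intros g_comp abs_mult_le vB gB\<close>)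
  show "integrable nu (\<lambda>v. v * g_x x v t)"
    by (rule intV[where B="Mv * Mgx"]) (use assms in \<open>auto intro!: continuous_intros g_comp abs_mult_le vB gxB\<close>)
  show "integrable nu (\<lambda>v. g x v t)"
    by (rule intV[where B="Mg"]) (use assms in \<open>auto intro!: continuous_intros g_comp gB\<close>)
  show "integrable nu (\<lambda>v. v * (g x v t)\<^sup>2)" unfolding power2_eq_square
    by (rule intV[where B="Mv * (Mg * Mg)"]) (use assms in \<open>auto intro!: continuous_intros g_comp abs_mult_le vB gB\<close>)
qed

lemma mn_cont:
  assumes t: "t \<in> {0..T}"
  shows "continuous_on {xL..xR} (m t)" "continuous_on {xL..xR} (n t)"
proof -
  have "continuous_on {xL..xR} (\<lambda>x. \<integral>v. v * g x v t \<partial>nu)"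
  proof (rule nu_cont[OF nu_prob, where B="Mv * Mg"])
    show "continuous_on {xL..xR} (\<lambda>x. v * g x v t)" if "v \<in> space nu" for v
      using that t nu_space by (auto intro!: continuous_intros g_comp)
    show "\<bar>v * g x v t\<bar> \<le> Mv * Mg" if "x \<in> {xL..xR}" "v \<in> space nu" for x v
      using that t by (auto simp: nu_space intro!: abs_mult_le vB gB)
    show "(\<lambda>v. v * g x v t) \<in> borel_measurable nu" if "x \<in> {xL..xR}" for x
      using vg_int(1)[OF that t] by auto
  qed
  then show "continuous_on {xL..xR} (m t)" unfolding m_def[abs_def] .
  have "continuous_on {xL..xR} (\<lambda>x. \<integral>v. v * g_x x v t \<partial>nu)"
  proof (rule nu_cont[OF nu_prob, where B="Mv * Mgx"])
    show "continuous_on {xL..xR} (\<lambda>x. v * g_x x v t)" if "v \<in> space nu" for v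
      using that t nu_space by (auto intro!: continuous_intros g_comp)
    show "\<bar>v * g_x x v t\<bar> \<le> Mv * Mgx" if "x \<in> {xL..xR}" "v \<in> space nu" for x v
      using that t by (auto simp: nu_space intro!: abs_mult_le vB gxB)
    show "(\<lambda>v. v * g_x x v t) \<in> borel_measurable nu" if "x \<in> {xL..xR}" for x
      using vg_int(2)[OF that t] by auto
  qed
  then show "continuous_on {xL..xR} (n t)" unfolding n_def[abs_def] .
qed

lemma n_bnd:
  assumes "x \<in> {xL..xR}" "t \<in> {0..T}"
  shows "\<bar>n t x\<bar> \<le> Mv * Mgx"
  unfolding n_def by (rule nu_bound[OF vg_int(2)[OF assms]]) (use assms in \<open>auto intro!: abs_mult_le vB gxB\<close>)

lemma Pd_eq:
  assumes t: "t \<in> {0<..T}"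
  shows "Pd t = -2 * integral {xL..xR} (\<lambda>x. sa x * (rho x t)\<^sup>2)
     - 2 * (rho xR t * m t xR - rho xL t * m t xL) + 2 * integral {xL..xR} (\<lambda>x. rho_x x t * m t x)"
proof -
  have tJ: "t \<in> {0..T}" using t by auto
  define mp where "mp x = - sa x * rho x t - rho_t x t" for x
  have mc: "continuous_on {xL..xR} (m t)" by (rule mn_cont(1)[OF tJ])
  have i1: "(\<lambda>x. rho_x x t * m t x) integrable_on {xL..xR}"
    by (rule integrable_continuous_interval) (use tJ in \<open>auto intro!: continuous_intros r_comp mc\<close>)
  have i2: "(\<lambda>x. rho x t * mp x) integrable_on {xL..xR}" unfolding mp_def
    by (rule integrable_continuous_interval) (use tJ in \<open>auto intro!: continuous_intros r_comp s_comp\<close>)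
  have i3: "(\<lambda>x. sa x * (rho x t)\<^sup>2) integrable_on {xL..xR}"
    by (rule integrable_continuous_interval) (use tJ in \<open>auto intro!: continuous_intros r_comp s_comp\<close>)
  have ftc: "((\<lambda>x. rho_x x t * m t x + rho x t * mp x) has_integral (rho xR t * m t xR - rho xL t * m t xL)) {xL..xR}"
  proof (rule fundamental_theorem_of_calculus_interior[OF less_imp_le[OF dom]])
    show "continuous_on {xL..xR} (\<lambda>x. rho x t * m t x)"
      using tJ by (auto intro!: continuous_intros r_comp mc)
    fix x assume x: "x \<in> {xL<..<xR}"
    have d1: "((\<lambda>y. rho y t) has_real_derivative rho_x x t) (at x)"
      using rho_dx[of x t] x tJ at_within_interior[of x "{xL..xR}"] by auto
    have d2: "(m t has_real_derivative mp x) (at x)"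
      using eq_rho[OF x t] unfolding vavg_def m_def[abs_def] mp_def .
    have "((\<lambda>y. rho y t * m t y) has_real_derivative rho_x x t * m t x + mp x * rho x t) (at x)"
      by (rule DERIV_mult[OF d1 d2])
    then show "((\<lambda>y. rho y t * m t y) has_vector_derivative rho_x x t * m t x + rho x t * mp x) (at x)"
      by (simp add: has_real_derivative_iff_has_vector_derivative[symmetric] mult.commute)
  qed
  have "integral {xL..xR} (\<lambda>x. rho_x x t * m t x) + integral {xL..xR} (\<lambda>x. rho x t * mp x)
      = rho xR t * m t xR - rho xL t * m t xL"
    using integral_add[OF i1 i2] integral_unique[OF ftc] by simp
  moreover have "Pd t = integral {xL..xR} (\<lambda>x. (-2) * (sa x * (rho x t)\<^sup>2) - 2 * (rho x t * mp x))"
    unfolding Pd_def by (rule integral_cong) (simp add: mp_def power2_eq_square algebra_simps)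
  moreover have "\<dots> = -2 * integral {xL..xR} (\<lambda>x. sa x * (rho x t)\<^sup>2) - 2 * integral {xL..xR} (\<lambda>x. rho x t * mp x)"
  proof -
    have j2: "(\<lambda>x. 2 * (rho x t * mp x)) integrable_on {xL..xR}" unfolding mp_def
      by (rule integrable_continuous_interval) (use tJ in \<open>auto intro!: continuous_intros r_comp s_comp\<close>)
    have j3: "(\<lambda>x. (-2) * (sa x * (rho x t)\<^sup>2)) integrable_on {xL..xR}"
      by (rule integrable_continuous_interval) (use tJ in \<open>auto intro!: continuous_intros r_comp s_comp\<close>)
    show ?thesis unfolding integral_diff[OF j3 j2] by simp
  qed
  ultimately show ?thesis by (simp add: algebra_simps)
qed


lemma mn_comp:
  assumes "continuous_on S f1" "\<And>s. s \<in> S \<Longrightarrow> f1 s \<in> {xL..xR}" "t \<in> {0..T}"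
  shows "continuous_on S (\<lambda>s. m t (f1 s))" "continuous_on S (\<lambda>s. n t (f1 s))"
proof -
  have "f1 ` S \<subseteq> {xL..xR}" using assms(2) by auto
  then show "continuous_on S (\<lambda>s. m t (f1 s))" "continuous_on S (\<lambda>s. n t (f1 s))"
    using continuous_on_compose2[OF mn_cont(1)[OF assms(3)] assms(1)]
      continuous_on_compose2[OF mn_cont(2)[OF assms(3)] assms(1)] by auto
qed

lemma coef_bnd:
  assumes "x \<in> {xL..xR}"
  shows "\<bar>ss x + \<epsilon>\<^sup>2 * sa x\<bar> \<le> Ms + \<epsilon>\<^sup>2 * Ma"
proof -
  have "\<bar>\<epsilon>\<^sup>2 * sa x\<bar> \<le> \<epsilon>\<^sup>2 * Ma" using aB[OF assms] by (simp add: abs_mult mult_left_mono)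
  then show ?thesis using sB[OF assms] by linarith
qed

lemma qd_eq:
  assumes t: "t \<in> {0<..T}" and v: "v \<in> V"
  shows "\<epsilon>\<^sup>2 * qd t v = (-\<epsilon>) * (v * (g xR v t)\<^sup>2 - v * (g xL v t)\<^sup>2)
     + (2 * \<epsilon>) * integral {xL..xR} (\<lambda>x. g x v t * n t x)
     - 2 * integral {xL..xR} (\<lambda>x. v * g x v t * rho_x x t)
     - 2 * integral {xL..xR} (\<lambda>x. (ss x + \<epsilon>\<^sup>2 * sa x) * (g x v t)\<^sup>2)"
proof -
  have tJ: "t \<in> {0..T}" using t by auto
  define R where "R x = (-\<epsilon> * v) * (2 * g x v t * g_x x v t) + (2 * \<epsilon>) * (g x v t * n t x)
     - 2 * (v * g x v t * rho_x x t) - 2 * ((ss x + \<epsilon>\<^sup>2 * sa x) * (g x v t)\<^sup>2)" for x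
  have pw: "\<epsilon>\<^sup>2 * (2 * g x v t * g_t x v t) = R x" if x: "x \<in> {xL<..<xR}" for x
  proof -
    have "g_t x v t = - (ss x / \<epsilon>\<^sup>2 + sa x) * g x v t - (1 / \<epsilon>) * v * g_x x v t + (1 / \<epsilon>) * n t x
            - (1 / \<epsilon>\<^sup>2) * v * rho_x x t"
      using eq_g[OF x v t] unfolding vavg_def n_def by linarith
    note e = this
    show ?thesis unfolding R_def e using eps_pos by (simp add: field_simps power2_eq_square)
  qed
  have "\<epsilon>\<^sup>2 * qd t v = integral {xL..xR} (\<lambda>x. \<epsilon>\<^sup>2 * (2 * g x v t * g_t x v t))"
    unfolding qd_def by simp
  also have "\<dots> = integral {xL..xR} R"
    by (rule integral_spike[where S="{xL, xR}"]) (use pw in auto)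
  also have "\<dots> = (-\<epsilon> * v) * ((g xR v t)\<^sup>2 - (g xL v t)\<^sup>2)
     + (2 * \<epsilon>) * integral {xL..xR} (\<lambda>x. g x v t * n t x)
     - 2 * integral {xL..xR} (\<lambda>x. v * g x v t * rho_x x t)
     - 2 * integral {xL..xR} (\<lambda>x. (ss x + \<epsilon>\<^sup>2 * sa x) * (g x v t)\<^sup>2)"
  proof (rule integral_unique)
    have h1: "((\<lambda>x. 2 * g x v t * g_x x v t) has_integral ((g xR v t)\<^sup>2 - (g xL v t)\<^sup>2)) {xL..xR}"
    proof (rule fundamental_theorem_of_calculus[OF less_imp_le[OF dom], where f="\<lambda>y. (g y v t)\<^sup>2"])
      fix x assume x: "x \<in> {xL..xR}"
      have "((\<lambda>y. (g y v t)\<^sup>2) has_real_derivative 2 * g x v t * g_x x v t) (at x within {xL..xR})"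
        using g_dx[OF x v tJ] by (auto intro!: derivative_eq_intros)
      then show "((\<lambda>y. (g y v t)\<^sup>2) has_vector_derivative 2 * g x v t * g_x x v t) (at x within {xL..xR})"
        by (simp add: has_real_derivative_iff_has_vector_derivative)
    qed
    have h2: "((\<lambda>x. g x v t * n t x) has_integral integral {xL..xR} (\<lambda>x. g x v t * n t x)) {xL..xR}"
      by (rule integrable_integral, rule integrable_continuous_interval)
         (use tJ v in \<open>auto intro!: continuous_intros g_comp mn_comp\<close>)
    have h3: "((\<lambda>x. v * g x v t * rho_x x t) has_integral integral {xL..xR} (\<lambda>x. v * g x v t * rho_x x t)) {xL..xR}"
      by (rule integrable_integral, rule integrable_continuous_interval)
         (use tJ v in \<open>auto intro!: continuous_intros g_comp r_comp\<close>)
    have h4: "((\<lambda>x. (ss x + \<epsilon>\<^sup>2 * sa x) * (g x v t)\<^sup>2) has_integral integral {xL..xR} (\<lambda>x. (ss x + \<epsilon>\<^sup>2 * sa x) * (g x v t)\<^sup>2)) {xL..xR}"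
      by (rule integrable_integral, rule integrable_continuous_interval)
         (use tJ v in \<open>auto intro!: continuous_intros g_comp s_comp\<close>)
    show "(R has_integral ((-\<epsilon> * v) * ((g xR v t)\<^sup>2 - (g xL v t)\<^sup>2)
     + (2 * \<epsilon>) * integral {xL..xR} (\<lambda>x. g x v t * n t x)
     - 2 * integral {xL..xR} (\<lambda>x. v * g x v t * rho_x x t)
     - 2 * integral {xL..xR} (\<lambda>x. (ss x + \<epsilon>\<^sup>2 * sa x) * (g x v t)\<^sup>2))) {xL..xR}"
      unfolding R_def by (intro has_integral_diff has_integral_add has_integral_mult_right h1 h2 h3 h4)
  qed
  finally show ?thesis by (simp add: algebra_simps)
qed


lemma param_cont:
  fixes f :: "real \<Rightarrow> real \<Rightarrow> real"
  assumes "continuous_on (U \<times> {xL..xR}) (\<lambda>p. f (fst p) (snd p))"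
  shows "continuous_on U (\<lambda>v. integral {xL..xR} (f v))"
proof -
  have "continuous_on U (\<lambda>v. integral (cbox xL xR) (f v))"
    using integral_continuous_on_param[of U xL xR f] assms by (simp add: split_beta')
  then show ?thesis by simp
qed

lemma Qd_eq:
  assumes t: "t \<in> {0<..T}"
  shows "\<epsilon>\<^sup>2 * Qd t = (-\<epsilon>) * ((\<integral>v. v * (g xR v t)\<^sup>2 \<partial>nu) - (\<integral>v. v * (g xL v t)\<^sup>2 \<partial>nu))
     - 2 * integral {xL..xR} (\<lambda>x. rho_x x t * m t x)
     - 2 * (\<integral>v. integral {xL..xR} (\<lambda>x. (ss x + \<epsilon>\<^sup>2 * sa x) * (g x v t)\<^sup>2) \<partial>nu)"
proof -
  have tJ: "t \<in> {0..T}" using t by auto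
  have LI: "xL \<in> {xL..xR}" "xR \<in> {xL..xR}" using dom by auto
  define F1 where "F1 v = integral {xL..xR} (\<lambda>x. g x v t * n t x)" for v
  define F2 where "F2 v = integral {xL..xR} (\<lambda>x. v * g x v t * rho_x x t)" for v
  define F3 where "F3 v = integral {xL..xR} (\<lambda>x. (ss x + \<epsilon>\<^sup>2 * sa x) * (g x v t)\<^sup>2)" for v
  have iF1: "integrable nu F1" unfolding F1_def
  proof (rule intV[where B="(Mg * (Mv * Mgx)) * (xR - xL)"])
    show "continuous_on V (\<lambda>v. integral {xL..xR} (\<lambda>x. g x v t * n t x))"
      by (rule param_cont) (use tJ in \<open>auto intro!: continuous_intros g_comp mn_comp\<close>)
    show "\<bar>integral {xL..xR} (\<lambda>x. g x v t * n t x)\<bar> \<le> (Mg * (Mv * Mgx)) * (xR - xL)" if "v \<in> V" for v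
      by (rule integral_abs_bound) (use tJ that dom in \<open>auto intro!: continuous_intros g_comp mn_comp abs_mult_le gB n_bnd\<close>)
  qed
  have iF2: "integrable nu F2" unfolding F2_def
  proof (rule intV[where B="((Mv * Mg) * Mrx) * (xR - xL)"])
    show "continuous_on V (\<lambda>v. integral {xL..xR} (\<lambda>x. v * g x v t * rho_x x t))"
      by (rule param_cont) (use tJ in \<open>auto intro!: continuous_intros g_comp r_comp\<close>)
    show "\<bar>integral {xL..xR} (\<lambda>x. v * g x v t * rho_x x t)\<bar> \<le> ((Mv * Mg) * Mrx) * (xR - xL)" if "v \<in> V" for v
      by (rule integral_abs_bound) (use tJ that dom in \<open>auto intro!: continuous_intros g_comp r_comp abs_mult_le vB gB rxB\<close>)
  qed
  have iF3: "integrable nu F3" unfolding F3_def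
  proof (rule intV[where B="((Ms + \<epsilon>\<^sup>2 * Ma) * (Mg * Mg)) * (xR - xL)"])
    show "continuous_on V (\<lambda>v. integral {xL..xR} (\<lambda>x. (ss x + \<epsilon>\<^sup>2 * sa x) * (g x v t)\<^sup>2))"
      by (rule param_cont) (use tJ in \<open>auto intro!: continuous_intros g_comp s_comp\<close>)
    show "\<bar>integral {xL..xR} (\<lambda>x. (ss x + \<epsilon>\<^sup>2 * sa x) * (g x v t)\<^sup>2)\<bar> \<le> ((Ms + \<epsilon>\<^sup>2 * Ma) * (Mg * Mg)) * (xR - xL)" if "v \<in> V" for v
      unfolding power2_eq_square[of "g _ v t"]
      by (rule integral_abs_bound) (use tJ that dom in \<open>auto intro!: continuous_intros g_comp s_comp abs_mult_le gB coef_bnd\<close>)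
  qed
  have "\<epsilon>\<^sup>2 * Qd t = (\<integral>v. \<epsilon>\<^sup>2 * qd t v \<partial>nu)" unfolding Qd_def by simp
  also have "\<dots> = (\<integral>v. (-\<epsilon>) * (v * (g xR v t)\<^sup>2 - v * (g xL v t)\<^sup>2) + (2 * \<epsilon>) * F1 v - 2 * F2 v - 2 * F3 v \<partial>nu)"
    by (rule Bochner_Integration.integral_cong[OF refl]) (simp add: qd_eq[OF t] nu_space F1_def F2_def F3_def)
  also have "\<dots> = (-\<epsilon>) * ((\<integral>v. v * (g xR v t)\<^sup>2 \<partial>nu) - (\<integral>v. v * (g xL v t)\<^sup>2 \<partial>nu))
      + (2 * \<epsilon>) * (\<integral>v. F1 v \<partial>nu) - 2 * (\<integral>v. F2 v \<partial>nu) - 2 * (\<integral>v. F3 v \<partial>nu)"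
    by (intro has_bochner_integral_integral_eq has_bochner_integral_diff has_bochner_integral_add
        has_bochner_integral_mult_right has_bochner_integral_integrable iF1 iF2 iF3 vg_int(4) LI tJ)
  also have "(\<integral>v. F1 v \<partial>nu) = 0"
  proof -
    have "(\<integral>v. F1 v \<partial>nu) = integral {xL..xR} (\<lambda>x. \<integral>v. g x v t * n t x \<partial>nu)"
      unfolding F1_def
    proof (rule nu_swap[OF nu_prob nu_space nu_sets less_imp_le[OF dom], where B="Mg * (Mv * Mgx)"])
      show "continuous_on ({xL..xR} \<times> V) (\<lambda>(x, v). g x v t * n t x)"
        unfolding split_beta' using tJ by (auto intro!: continuous_intros g_comp mn_comp)
      show "\<bar>g x v t * n t x\<bar> \<le> Mg * (Mv * Mgx)" if "x \<in> {xL..xR}" "v \<in> V" for x v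
        using that tJ by (auto intro!: abs_mult_le gB n_bnd)
    qed
    also have "\<dots> = integral {xL..xR} (\<lambda>x. 0)"
    proof (rule integral_spike[where S="{xL, xR}"])
      show "negligible {xL, xR}" by simp
      fix x assume "x \<in> {xL..xR} - {xL, xR}"
      then have x: "x \<in> {xL<..<xR}" by auto
      show "0 = (\<integral>v. g x v t * n t x \<partial>nu)"
        using gavg0[OF x tJ] by simp
    qed
    finally show ?thesis by simp
  qed
  also have "(\<integral>v. F2 v \<partial>nu) = integral {xL..xR} (\<lambda>x. rho_x x t * m t x)"
  proof -
    have "(\<integral>v. F2 v \<partial>nu) = integral {xL..xR} (\<lambda>x. \<integral>v. v * g x v t * rho_x x t \<partial>nu)"
      unfolding F2_def
    proof (rule nu_swap[OF nu_prob nu_space nu_sets less_imp_le[OF dom], where B="(Mv * Mg) * Mrx"])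
      show "continuous_on ({xL..xR} \<times> V) (\<lambda>(x, v). v * g x v t * rho_x x t)"
        unfolding split_beta' using tJ by (auto intro!: continuous_intros g_comp r_comp)
      show "\<bar>v * g x v t * rho_x x t\<bar> \<le> (Mv * Mg) * Mrx" if "x \<in> {xL..xR}" "v \<in> V" for x v
        using that tJ by (auto intro!: abs_mult_le vB gB rxB)
    qed
    also have "\<dots> = integral {xL..xR} (\<lambda>x. rho_x x t * m t x)"
      by (rule integral_cong) (simp add: m_def mult.commute)
    finally show ?thesis .
  qed
  finally show ?thesis unfolding F3_def by simp
qed


definition "Ed t = Pd t + \<epsilon>\<^sup>2 * Qd t"
definition "dd t = integral {xL..xR} (\<lambda>x. sa x * (rho x t)\<^sup>2)
   + (\<integral>v. integral {xL..xR} (\<lambda>x. (ss x + \<epsilon>\<^sup>2 * sa x) * (g x v t)\<^sup>2) \<partial>nu)"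
definition "bb t = (2 * rho xL t * m t xL + \<epsilon> * (\<integral>v. v * (g xL v t)\<^sup>2 \<partial>nu))
   - (2 * rho xR t * m t xR + \<epsilon> * (\<integral>v. v * (g xR v t)\<^sup>2 \<partial>nu))"

lemma Ed_eq:
  assumes t: "t \<in> {0<..T}"
  shows "Ed t = -2 * dd t + bb t"
  unfolding Ed_def Qd_eq[OF t] Pd_eq[OF t] dd_def bb_def by (simp add: algebra_simps)

lemma Eder:
  assumes t: "t \<in> {0..T}"
  shows "((\<lambda>t. P t + \<epsilon>\<^sup>2 * Q t) has_real_derivative Ed t) (at t within {0..T})"
  unfolding Ed_def using Pder[OF t] Qder[OF t] by (auto intro!: derivative_eq_intros)

lemma dd_cont: "continuous_on {0..T} dd"
proof -
  have c1: "continuous_on {0..T} (\<lambda>t. integral {xL..xR} (\<lambda>x. sa x * (rho x t)\<^sup>2))"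
    by (rule param_cont) (auto intro!: continuous_intros r_comp s_comp)
  have c2: "continuous_on {0..T} (\<lambda>t. \<integral>v. integral {xL..xR} (\<lambda>x. (ss x + \<epsilon>\<^sup>2 * sa x) * (g x v t)\<^sup>2) \<partial>nu)"
  proof (rule nu_cont[OF nu_prob, where B="((Ms + \<epsilon>\<^sup>2 * Ma) * (Mg * Mg)) * (xR - xL)"])
    show "continuous_on {0..T} (\<lambda>t. integral {xL..xR} (\<lambda>x. (ss x + \<epsilon>\<^sup>2 * sa x) * (g x v t)\<^sup>2))"
      if "v \<in> space nu" for v
      by (rule param_cont) (use that nu_space in \<open>auto intro!: continuous_intros g_comp s_comp\<close>)
    show "\<bar>integral {xL..xR} (\<lambda>x. (ss x + \<epsilon>\<^sup>2 * sa x) * (g x v t)\<^sup>2)\<bar> \<le> ((Ms + \<epsilon>\<^sup>2 * Ma) * (Mg * Mg)) * (xR - xL)"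
      if "t \<in> {0..T}" "v \<in> space nu" for t v
    proof -
      have v: "v \<in> V" using that nu_space by auto
      show ?thesis
        unfolding power2_eq_square[of "g _ v t"]
        by (rule integral_abs_bound) (use that v dom in \<open>auto intro!: continuous_intros g_comp s_comp abs_mult_le gB coef_bnd\<close>)
    qed
    show "(\<lambda>v. integral {xL..xR} (\<lambda>x. (ss x + \<epsilon>\<^sup>2 * sa x) * (g x v t)\<^sup>2)) \<in> borel_measurable nu"
      if "t \<in> {0..T}" for t
      by (rule measV, rule param_cont) (use that in \<open>auto intro!: continuous_intros g_comp s_comp\<close>)
  qed
  show ?thesis unfolding dd_def[abs_def] by (intro continuous_intros c1 c2)
qed

lemma bd_id:
  assumes y: "y \<in> {xL..xR}" and t: "t \<in> {0..T}"
  shows "2 * rho y t * m t y + \<epsilon> * (\<integral>v. v * (g y v t)\<^sup>2 \<partial>nu)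
       = (1/\<epsilon>) * (\<integral>v. v * (rho y t + \<epsilon> * g y v t)\<^sup>2 \<partial>nu)"
proof -
  have "(\<integral>v. v * (rho y t + \<epsilon> * g y v t)\<^sup>2 \<partial>nu)
      = (\<integral>v. (rho y t)\<^sup>2 * v + (2 * \<epsilon> * rho y t) * (v * g y v t) + \<epsilon>\<^sup>2 * (v * (g y v t)\<^sup>2) \<partial>nu)"
    by (rule Bochner_Integration.integral_cong[OF refl]) (simp add: power2_eq_square algebra_simps)
  also have "\<dots> = (rho y t)\<^sup>2 * (\<integral>v. v \<partial>nu) + (2 * \<epsilon> * rho y t) * m t y + \<epsilon>\<^sup>2 * (\<integral>v. v * (g y v t)\<^sup>2 \<partial>nu)"
    unfolding m_def
    by (intro has_bochner_integral_integral_eq has_bochner_integral_add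
        has_bochner_integral_mult_right has_bochner_integral_integrable intv vg_int y t)
  finally show ?thesis using eps_pos by (simp add: vint0 field_simps power2_eq_square)
qed

lemma main:
  shows "((\<forall>t\<in>{0<..T}. rho xL t = rho xR t \<and> (\<forall>v\<in>V. g xL v t = g xR v t))
            \<longrightarrow> (\<lambda>t. L2sq xL xR (\<lambda>x. rho x t) + \<epsilon>\<^sup>2 * tnormsq nu xL xR (\<lambda>x v. g x v t)) T
              = - 2 * integral {0..T} (\<lambda>t. integral {xL..xR} (\<lambda>x. sa x * (rho x t)\<^sup>2)
               + vavg nu (\<lambda>v. integral {xL..xR} (\<lambda>x. (ss x + \<epsilon>\<^sup>2 * sa x) * (g x v t)\<^sup>2)))
              + (\<lambda>t. L2sq xL xR (\<lambda>x. rho x t) + \<epsilon>\<^sup>2 * tnormsq nu xL xR (\<lambda>x v. g x v t)) 0)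
       \<and> ((\<forall>t\<in>{0<..T}. (\<forall>v\<in>V. v > 0 \<longrightarrow> rho xL t + \<epsilon> * g xL v t = 0)
                       \<and> (\<forall>v\<in>V. v < 0 \<longrightarrow> rho xR t + \<epsilon> * g xR v t = 0))
            \<longrightarrow> (\<lambda>t. L2sq xL xR (\<lambda>x. rho x t) + \<epsilon>\<^sup>2 * tnormsq nu xL xR (\<lambda>x v. g x v t)) T
              \<le> - 2 * integral {0..T} (\<lambda>t. integral {xL..xR} (\<lambda>x. sa x * (rho x t)\<^sup>2)
               + vavg nu (\<lambda>v. integral {xL..xR} (\<lambda>x. (ss x + \<epsilon>\<^sup>2 * sa x) * (g x v t)\<^sup>2)))
              + (\<lambda>t. L2sq xL xR (\<lambda>x. rho x t) + \<epsilon>\<^sup>2 * tnormsq nu xL xR (\<lambda>x v. g x v t)) 0)"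
proof -
  define E where "E t = P t + \<epsilon>\<^sup>2 * Q t" for t
  have Eeq: "(\<lambda>t. L2sq xL xR (\<lambda>x. rho x t) + \<epsilon>\<^sup>2 * tnormsq nu xL xR (\<lambda>x v. g x v t)) = E"
    unfolding E_def P_def Q_def q_def L2sq_def tnormsq_def vavg_def by simp
  define D where "D = integral {0..T} dd"
  have Deq: "integral {0..T} (\<lambda>t. integral {xL..xR} (\<lambda>x. sa x * (rho x t)\<^sup>2)
               + vavg nu (\<lambda>v. integral {xL..xR} (\<lambda>x. (ss x + \<epsilon>\<^sup>2 * sa x) * (g x v t)\<^sup>2))) = D"
    unfolding D_def dd_def[abs_def] vavg_def ..
  have ftc: "(Ed has_integral (E T - E 0)) {0..T}"
  proof (rule fundamental_theorem_of_calculus)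
    show "0 \<le> T" using T_pos by simp
    fix t assume "t \<in> {0..T}"
    from Eder[OF this] show "(E has_vector_derivative Ed t) (at t within {0..T})"
      unfolding E_def[abs_def] by (simp add: has_real_derivative_iff_has_vector_derivative)
  qed
  have dint: "(dd has_integral D) {0..T}"
    unfolding D_def by (rule integrable_integral, rule integrable_continuous_interval, rule dd_cont)
  have sum: "((\<lambda>t. Ed t + 2 * dd t) has_integral (E T - E 0 + 2 * D)) {0..T}"
    by (intro has_integral_add has_integral_mult_right ftc dint)
  have bb_eq: "Ed t + 2 * dd t = bb t" if "t \<in> {0<..T}" for t
    using Ed_eq[OF that] by simp
  have LR: "xL \<in> {xL..xR}" "xR \<in> {xL..xR}" using dom by auto
  have part1: "E T = - 2 * D + E 0" if per: "\<forall>t\<in>{0<..T}. rho xL t = rho xR t \<and> (\<forall>v\<in>V. g xL v t = g xR v t)"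
  proof -
    have "bb t = 0" if t: "t \<in> {0<..T}" for t
    proof -
      have r: "rho xL t = rho xR t" using per t by auto
      have gg: "\<And>v. v \<in> space nu \<Longrightarrow> g xL v t = g xR v t" using per t nu_space by auto
      have "m t xL = m t xR" unfolding m_def
        by (rule Bochner_Integration.integral_cong[OF refl]) (simp add: gg)
      moreover have "(\<integral>v. v * (g xL v t)\<^sup>2 \<partial>nu) = (\<integral>v. v * (g xR v t)\<^sup>2 \<partial>nu)"
        by (rule Bochner_Integration.integral_cong[OF refl]) (simp add: gg)
      ultimately show ?thesis unfolding bb_def r by simp
    qed
    then have "((\<lambda>t. 0) has_integral (E T - E 0 + 2 * D)) {0..T}"
      using has_integral_spike[OF _ _ sum, of "{0}" "\<lambda>t. 0"] bb_eq by auto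
    then have "E T - E 0 + 2 * D = 0" using has_integral_0_eq by blast
    then show ?thesis by simp
  qed
  have part2: "E T \<le> - 2 * D + E 0" if dir: "\<forall>t\<in>{0<..T}. (\<forall>v\<in>V. v > 0 \<longrightarrow> rho xL t + \<epsilon> * g xL v t = 0)
                       \<and> (\<forall>v\<in>V. v < 0 \<longrightarrow> rho xR t + \<epsilon> * g xR v t = 0)"
  proof -
    have "bb t \<le> 0" if t: "t \<in> {0<..T}" for t
    proof -
      have tJ: "t \<in> {0..T}" using t by auto
      have L: "(\<integral>v. v * (rho xL t + \<epsilon> * g xL v t)\<^sup>2 \<partial>nu) \<le> 0"
      proof -
        have "0 \<le> (\<integral>v. - (v * (rho xL t + \<epsilon> * g xL v t)\<^sup>2) \<partial>nu)"
        proof (rule Bochner_Integration.integral_nonneg)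
          fix v assume "v \<in> space nu"
          then have v: "v \<in> V" using nu_space by auto
          show "0 \<le> - (v * (rho xL t + \<epsilon> * g xL v t)\<^sup>2)"
          proof (cases "v > 0")
            case True then show ?thesis using dir t v by auto
          next
            case False then show ?thesis by (simp add: mult_nonpos_nonneg)
          qed
        qed
        then show ?thesis by simp
      qed
      have R: "0 \<le> (\<integral>v. v * (rho xR t + \<epsilon> * g xR v t)\<^sup>2 \<partial>nu)"
      proof (rule Bochner_Integration.integral_nonneg)
        fix v assume "v \<in> space nu"
        then have v: "v \<in> V" using nu_space by auto
        show "0 \<le> v * (rho xR t + \<epsilon> * g xR v t)\<^sup>2"
        proof (cases "v < 0")
          case True then show ?thesis using dir t v by auto
        next
          case False then show ?thesis by simp
        qed
      qed
      have "bb t = (1/\<epsilon>) * (\<integral>v. v * (rho xL t + \<epsilon> * g xL v t)\<^sup>2 \<partial>nu)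
                 - (1/\<epsilon>) * (\<integral>v. v * (rho xR t + \<epsilon> * g xR v t)\<^sup>2 \<partial>nu)"
        unfolding bb_def bd_id[OF LR(1) tJ] bd_id[OF LR(2) tJ] ..
      also have "\<dots> \<le> 0"
      proof -
        have "0 \<le> 1/\<epsilon>" using eps_pos by simp
        have a: "(1/\<epsilon>) * (\<integral>v. v * (rho xL t + \<epsilon> * g xL v t)\<^sup>2 \<partial>nu) \<le> 0"
          by (rule mult_nonneg_nonpos[OF \<open>0 \<le> 1/\<epsilon>\<close> L])
        have b: "0 \<le> (1/\<epsilon>) * (\<integral>v. v * (rho xR t + \<epsilon> * g xR v t)\<^sup>2 \<partial>nu)"
          by (rule mult_nonneg_nonneg[OF \<open>0 \<le> 1/\<epsilon>\<close> R])
        from a b show ?thesis by linarith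
      qed
      finally show ?thesis .
    qed
    define f0 where "f0 t = (if t = 0 then 0 else Ed t + 2 * dd t)" for t
    have "(f0 has_integral (E T - E 0 + 2 * D)) {0..T}"
      by (rule has_integral_spike[OF _ _ sum, of "{0}"]) (auto simp: f0_def)
    moreover have "f0 t \<le> 0" if "t \<in> {0..T}" for t
      using that bb_eq \<open>\<And>t. t \<in> {0<..T} \<Longrightarrow> bb t \<le> 0\<close> by (auto simp: f0_def)
    ultimately have "E T - E 0 + 2 * D \<le> 0"
      using has_integral_le[of f0 _ "{0..T}" "\<lambda>_. 0" 0] by auto
    then show ?thesis by simp
  qed
  have Eeq': "L2sq xL xR (\<lambda>x. rho x t) + \<epsilon>\<^sup>2 * tnormsq nu xL xR (\<lambda>x v. g x v t) = E t" for t
    using fun_cong[OF Eeq, of t] by simp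
  show ?thesis unfolding Eeq' Deq using part1 part2 by blast
qed


end

theorem theorem2p1:
  fixes xL xR T \<epsilon> :: real
    and \<Omega>v :: "real set" and nu :: "real measure"
    and ss sa :: "real \<Rightarrow> real"
    and rho rho_t rho_x :: "real \<Rightarrow> real \<Rightarrow> real"
    and g g_t g_x :: "real \<Rightarrow> real \<Rightarrow> real \<Rightarrow> real"
  assumes dom: "xL < xR" and T_pos: "T > 0" and eps_pos: "\<epsilon> > 0"
    (* velocity space and its measure *)
    and Ov_bounded: "bounded \<Omega>v"
    and nu_space: "space nu = \<Omega>v"
    and nu_sets: "sets nu = sets (restrict_space borel \<Omega>v)"
    and nu_prob: "prob_space nu"
    and nu_mean: "vavg nu (\<lambda>v. v) = 0"
    (* cross sections *)
    and ss_pos: "\<And>x. x \<in> {xL..xR} \<Longrightarrow> ss x > 0"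
    and sa_nonneg: "\<And>x. x \<in> {xL..xR} \<Longrightarrow> sa x \<ge> 0"
    and ss_cont: "continuous_on {xL..xR} ss"
    and sa_cont: "continuous_on {xL..xR} sa"
    (* smoothness of rho *)
    and rho_dt: "\<And>x t. x \<in> {xL..xR} \<Longrightarrow> t \<in> {0..T} \<Longrightarrow>
        ((\<lambda>s. rho x s) has_real_derivative rho_t x t) (at t within {0..T})"
    and rho_dx: "\<And>x t. x \<in> {xL..xR} \<Longrightarrow> t \<in> {0..T} \<Longrightarrow>
        ((\<lambda>y. rho y t) has_real_derivative rho_x x t) (at x within {xL..xR})"
    and rho_cont: "continuous_on ({xL..xR} \<times> {0..T}) (\<lambda>(x, t). rho x t)"
    and rho_t_cont: "continuous_on ({xL..xR} \<times> {0..T}) (\<lambda>(x, t). rho_t x t)"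
    and rho_x_cont: "continuous_on ({xL..xR} \<times> {0..T}) (\<lambda>(x, t). rho_x x t)"
    (* smoothness of g *)
    and g_dt: "\<And>x v t. x \<in> {xL..xR} \<Longrightarrow> v \<in> \<Omega>v \<Longrightarrow> t \<in> {0..T} \<Longrightarrow>
        ((\<lambda>s. g x v s) has_real_derivative g_t x v t) (at t within {0..T})"
    and g_dx: "\<And>x v t. x \<in> {xL..xR} \<Longrightarrow> v \<in> \<Omega>v \<Longrightarrow> t \<in> {0..T} \<Longrightarrow>
        ((\<lambda>y. g y v t) has_real_derivative g_x x v t) (at x within {xL..xR})"
    and g_cont: "continuous_on ({xL..xR} \<times> \<Omega>v \<times> {0..T}) (\<lambda>(x, v, t). g x v t)"
    and g_t_cont: "continuous_on ({xL..xR} \<times> \<Omega>v \<times> {0..T}) (\<lambda>(x, v, t). g_t x v t)"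
    and g_x_cont: "continuous_on ({xL..xR} \<times> \<Omega>v \<times> {0..T}) (\<lambda>(x, v, t). g_x x v t)"
    and g_bdd: "bounded ((\<lambda>(x, v, t). g x v t) ` ({xL..xR} \<times> \<Omega>v \<times> {0..T}))"
    and g_t_bdd: "bounded ((\<lambda>(x, v, t). g_t x v t) ` ({xL..xR} \<times> \<Omega>v \<times> {0..T}))"
    and g_x_bdd: "bounded ((\<lambda>(x, v, t). g_x x v t) ` ({xL..xR} \<times> \<Omega>v \<times> {0..T}))"
    (* the micro-macro system on (xL,xR) x (0,T] *)
    and eq_rho: "\<And>x t. x \<in> {xL<..<xR} \<Longrightarrow> t \<in> {0<..T} \<Longrightarrow>
        ((\<lambda>y. vavg nu (\<lambda>v. v * g y v t)) has_real_derivative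
           (- sa x * rho x t - rho_t x t)) (at x)"
    and eq_g: "\<And>x v t. x \<in> {xL<..<xR} \<Longrightarrow> v \<in> \<Omega>v \<Longrightarrow> t \<in> {0<..T} \<Longrightarrow>
        g_t x v t + (1 / \<epsilon>) * v * g_x x v t - (1 / \<epsilon>) * vavg nu (\<lambda>w. w * g_x x w t)
          + (1 / \<epsilon>\<^sup>2) * v * rho_x x t
        = - (ss x / \<epsilon>\<^sup>2 + sa x) * g x v t"
    (* initial condition *)
    and init: "\<And>x. x \<in> {xL<..<xR} \<Longrightarrow> vavg nu (\<lambda>v. g x v 0) = 0"
  defines "E \<equiv> \<lambda>t. L2sq xL xR (\<lambda>x. rho x t) + \<epsilon>\<^sup>2 * tnormsq nu xL xR (\<lambda>x v. g x v t)"
    and "D \<equiv> integral {0..T} (\<lambda>t. integral {xL..xR} (\<lambda>x. sa x * (rho x t)\<^sup>2)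
               + vavg nu (\<lambda>v. integral {xL..xR} (\<lambda>x. (ss x + \<epsilon>\<^sup>2 * sa x) * (g x v t)\<^sup>2)))"
  shows "((\<forall>t\<in>{0<..T}. rho xL t = rho xR t \<and> (\<forall>v\<in>\<Omega>v. g xL v t = g xR v t))
            \<longrightarrow> E T = - 2 * D + E 0)
       \<and> ((\<forall>t\<in>{0<..T}. (\<forall>v\<in>\<Omega>v. v > 0 \<longrightarrow> rho xL t + \<epsilon> * g xL v t = 0)
                       \<and> (\<forall>v\<in>\<Omega>v. v < 0 \<longrightarrow> rho xR t + \<epsilon> * g xR v t = 0))
            \<longrightarrow> E T \<le> - 2 * D + E 0)"
proof -
  interpret mm xL xR T \<epsilon> \<Omega>v nu ss sa rho rho_t rho_x g g_t g_x
    by (rule mm.intro) (rule assms; assumption)+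
  show ?thesis unfolding assms(29,30) using main by simp
qed

end
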